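(* Let $\delta$ be $\mathfrak l_m$-dominant integral, $k\ge k'$ non-negative integers, $K\in\kappa(\delta,k)$, $K'\in\kappa(\delta,k')$, $K\ne K'$, and suppose $\chi_{\delta+\lambda_K}=\chi_{\delta+\lambda_{K'}}$ (so that $i:=i(\delta,k)$ is defined). Then there exists an $\mathfrak a_m$-dominant $\mathfrak a_m$-integral weight $\mu$ such that $\delta+\lambda_K=\mu[i-1]$ and $\delta+\lambda_{K'}=\mu[i]$.
   Context: $\mathfrak a_m\cong\mathfrak{sl}_{m+1}$ is the projective subalgebra $\mathrm{Span}\{\partial_{x_i},x_j\partial_{x_i},x_j\sum_rx_r\partial_{x_r}\}$ of polynomial vector fields on $\mathbb R^m$, with Cartan subalgebra $\mathfrak h_m=\mathrm{Span}\{x_i\partial_{x_i}\}$. Weights: $\mathfrak h_m^*=\{\lambda=\sum_{i=0}^m\lambda_i\epsilon_i:\sum\lambda_i=0\}$ with $\lambda(x_j\partial_{x_j})=\lambda_j$ ($1\le j\le m$). $\lambda$ is $\mathfrak a_m$-dominant integral if $\lambda_i-\lambda_{i+1}\in\mathbb N$ for $0\le i<m$, and $\mathfrak l_m$-dominant integral if this holds for $1\le i<m$. Let $\rho=\sum_{i=0}^m(\tfrac m2-i)\epsilon_i$; $S_{m+1}$ permutes indices $0,\dots,m$, $w\cdot\lambda=w(\lambda+\rho)-\rho$; $\chi_\lambda$ is the $\mathfrak a_m$-infinitesimal character attached to $\lambda$, with $\chi_\lambda=\chi_{\lambda'}$ iff $\lambda'\in S_{m+1}\cdot\lambda$. For $\mu\in\mathfrak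 h_m^*$, $\mu[0]=\mu$ and for $1\le i\le m$, $\mu[i]=w_i\cdot\mu$ where, writing $\sigma=\mu+\rho$, $\mu[i]+\rho=(\sigma_i,\sigma_0,\sigma_1,\dots,\sigma_{i-1},\sigma_{i+1},\dots,\sigma_m)$. For $K\in\mathbb N^m$: $|K|=\sum K_i$, $\lambda_K=|K|\epsilon_0-\sum_{i=1}^mK_i\epsilon_i$, $\kappa(\delta,k)=\{K\in\mathbb N^m:|K|=k,\ K_i\le\delta_i-\delta_{i+1}\text{ for }i<m\}$. For $\delta$: $i(\delta)\in\{1,\dots,m\}$ maximal with $\delta_1=\cdots=\delta_{i(\delta)}$; $\tilde\delta_i=\delta_i-i-\delta_0$; $\delta$ is resonant if $\tilde\delta_{i(\delta)}\in\mathbb Z^+$; for $\delta$ resonant, $k\in\mathbb Z^+$, $\tilde\delta_{i(\delta)}\ge k$, $i(\delta,k)\in\{i(\delta),\dots,m\}$ is maximal with $\tilde\delta_{i(\delta,k)}\ge k$. *)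

theory Defs
  imports "HOL-Analysis.Analysis" "HOL-Combinatorics.Permutations"
begin

(* Weights of h_m^* : functions nat => real, only indices 0..m are relevant;
   lambda_i is the coefficient of epsilon_i. *)
definition is_weight :: "nat \<Rightarrow> (nat \<Rightarrow> real) \<Rightarrow> bool" where
  "is_weight m la \<longleftrightarrow> (\<Sum>i=0..m. la i) = 0"

definition weq :: "nat \<Rightarrow> (nat \<Rightarrow> real) \<Rightarrow> (nat \<Rightarrow> real) \<Rightarrow> bool" where
  "weq m a b \<longleftrightarrow> (\<forall>i\<le>m. a i = b i)"

definition a_dom_int :: "nat \<Rightarrow> (nat \<Rightarrow> real) \<Rightarrow> bool" where
  "a_dom_int m la \<longleftrightarrow> (\<forall>i<m. la i - la (Suc i) \<in> \<nat>)"

definition l_dom_int :: "nat \<Rightarrow> (nat \<Rightarrow> real) \<Rightarrow> bool" where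
  "l_dom_int m la \<longleftrightarrow> (\<forall>i. 1 \<le> i \<and> i < m \<longrightarrow> la i - la (Suc i) \<in> \<nat>)"

definition rho :: "nat \<Rightarrow> nat \<Rightarrow> real" where
  "rho m i = real m / 2 - real i"

(* chi_la = chi_la' iff la' \<in> S_{m+1} . la (dot action w.la = w(la+rho)-rho) *)
definition same_inf_char :: "nat \<Rightarrow> (nat \<Rightarrow> real) \<Rightarrow> (nat \<Rightarrow> real) \<Rightarrow> bool" where
  "same_inf_char m la la' \<longleftrightarrow>
     (\<exists>p. p permutes {0..m} \<and> (\<forall>i\<le>m. la' i + rho m i = la (p i) + rho m (p i)))"

definition wshift :: "nat \<Rightarrow> (nat \<Rightarrow> real) \<Rightarrow> nat \<Rightarrow> (nat \<Rightarrow> real)" where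
  "wshift m mu i = (\<lambda>j. (let sigma = (\<lambda>t. mu t + rho m t) in
      if j = 0 then sigma i else if j \<le> i then sigma (j - 1) else sigma j) - rho m j)"

(* K \<in> N^m indexed by 1..m (K j = 0 outside 1..m) *)
definition normK :: "nat \<Rightarrow> (nat \<Rightarrow> nat) \<Rightarrow> nat" where
  "normK m K = (\<Sum>i=1..m. K i)"

definition lamK :: "nat \<Rightarrow> (nat \<Rightarrow> nat) \<Rightarrow> (nat \<Rightarrow> real)" where
  "lamK m K = (\<lambda>j. if j = 0 then real (normK m K) else - real (K j))"

definition kappa :: "nat \<Rightarrow> (nat \<Rightarrow> real) \<Rightarrow> nat \<Rightarrow> (nat \<Rightarrow> nat) set" where
  "kappa m de k = {K. (\<forall>j. (j = 0 \<or> m < j) \<longrightarrow> K j = 0) \<and> normK m K = k \<and>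
      (\<forall>i. 1 \<le> i \<and> i < m \<longrightarrow> real (K i) \<le> de i - de (Suc i))}"

definition idelta :: "nat \<Rightarrow> (nat \<Rightarrow> real) \<Rightarrow> nat" where
  "idelta m de = (GREATEST i. 1 \<le> i \<and> i \<le> m \<and> (\<forall>j. 1 \<le> j \<and> j \<le> i \<longrightarrow> de j = de 1))"

definition dtilde :: "(nat \<Rightarrow> real) \<Rightarrow> nat \<Rightarrow> real" where
  "dtilde de i = de i - real i - de 0"

definition idelta_k :: "nat \<Rightarrow> (nat \<Rightarrow> real) \<Rightarrow> nat \<Rightarrow> nat" where
  "idelta_k m de k = (GREATEST i. idelta m de \<le> i \<and> i \<le> m \<and> dtilde de i \<ge> real k)"

end

theory Submission
  imports Defs
begin

definition sdec :: "nat \<Rightarrow> (nat \<Rightarrow> real) \<Rightarrow> bool" where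
  "sdec m f \<longleftrightarrow> (\<forall>j. 1 \<le> j \<and> j < m \<longrightarrow> f (Suc j) < f j)"

lemma sdec_lt: "sdec m f \<Longrightarrow> 1 \<le> i \<Longrightarrow> i < j \<Longrightarrow> j \<le> m \<Longrightarrow> f j < f i"
proof (induction j)
  case 0 then show ?case by simp
next
  case (Suc j)
  have st: "f (Suc j) < f j" using Suc.prems unfolding sdec_def by auto
  show ?case
  proof (cases "i = j")
    case True then show ?thesis using st by simp
  next
    case False then have "f j < f i" using Suc by auto
    then show ?thesis using st by simp
  qed
qed

lemma sdec_le: "sdec m f \<Longrightarrow> 1 \<le> i \<Longrightarrow> i \<le> j \<Longrightarrow> j \<le> m \<Longrightarrow> f j \<le> f i"
  using sdec_lt[of m f i j] by (cases "i = j") auto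

lemma cnt_split: "card {l\<in>{0..m::nat}. P l} = card {l\<in>{1..m}. P l} + (if P 0 then 1 else 0)"
proof (cases "P 0")
  case True
  have e: "{l\<in>{0..m::nat}. P l} = insert 0 {l\<in>{1..m}. P l}" using True by auto
  have f1: "finite {l\<in>{1..m}. P l}" by simp
  have f2: "0 \<notin> {l\<in>{1..m::nat}. P l}" by simp
  have c: "card (insert 0 {l\<in>{1..m}. P l}) = Suc (card {l\<in>{1..m}. P l})"
    using card_insert_disjoint[OF f1 f2] .
  have "card {l\<in>{0..m::nat}. P l} = Suc (card {l\<in>{1..m}. P l})" by (simp only: e c)
  then show ?thesis using True by simp
next
  case False
  have "{l\<in>{0..m::nat}. P l} = {l\<in>{1..m}. P l}" using False by (auto simp: Suc_le_eq intro: Nat.gr0I)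
  then show ?thesis using False by simp
qed

lemma cnt_perm:
  assumes p: "p permutes {0..m::nat}" and g: "\<forall>l\<le>m. g l = f (p l)"
  shows "card {l\<in>{0..m}. P (g l)} = card {l\<in>{0..m}. P (f l)}"
proof -
  have A: "{l\<in>{0..m}. P (g l)} = {l\<in>{0..m}. P (f (p l))}" using g by auto
  have "p ` {l\<in>{0..m}. P (f (p l))} = {l\<in>{0..m}. P (f l)}"
  proof
    show "p ` {l\<in>{0..m}. P (f (p l))} \<subseteq> {l\<in>{0..m}. P (f l)}"
      using permutes_in_image[OF p] by auto
  next
    show "{l\<in>{0..m}. P (f l)} \<subseteq> p ` {l\<in>{0..m}. P (f (p l))}"
    proof
      fix y assume y: "y \<in> {l\<in>{0..m}. P (f l)}"
      have "inv p y \<in> {0..m}" using y permutes_in_image[OF permutes_inv[OF p]] by auto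
      moreover have "p (inv p y) = y" using permutes_inverses(1)[OF p] by simp
      ultimately show "y \<in> p ` {l\<in>{0..m}. P (f (p l))}" using y by (metis (no_types, lifting) image_eqI mem_Collect_eq)
    qed
  qed
  moreover have "inj_on p {l\<in>{0..m}. P (f (p l))}"
    using permutes_inj[OF p] by (meson inj_on_subset subset_UNIV)
  ultimately show ?thesis using A card_image by metis
qed

lemma C_self:
  assumes "sdec m f" "1 \<le> j" "j \<le> m"
  shows "card {l\<in>{1..m}. f j \<le> f l} = j"
proof -
  have "{l\<in>{1..m}. f j \<le> f l} = {1..j}"
  proof safe
    fix l assume "l \<in> {1..m}" "f j \<le> f l"
    then show "l \<in> {1..j}" using sdec_lt[OF assms(1), of j l] assms by (auto simp: not_le[symmetric])
  next
    fix l assume "l \<in> {1..j}"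
    then show "l \<in> {1..m}" "f j \<le> f l" using sdec_le[OF assms(1), of l j] assms by auto
  qed
  then show ?thesis by simp
qed

lemma C_ge:
  assumes "sdec m g" "1 \<le> j" "j \<le> m" "card {l\<in>{1..m}. x \<le> g l} \<ge> j"
  shows "x \<le> g j"
proof (rule ccontr)
  assume "\<not> x \<le> g j"
  then have "{l\<in>{1..m}. x \<le> g l} \<subseteq> {1..<j}"
    using sdec_le[OF assms(1), of j] assms(2,3) by (force simp: not_less[symmetric])
  then have "card {l\<in>{1..m}. x \<le> g l} \<le> j - 1" using card_mono[of "{1..<j}"] by fastforce
  then show False using assms(2,4) by linarith
qed

lemma G:
  assumes "sdec m f" "sdec m g" "f 0 = g 0"
    and c: "\<forall>x. card {l\<in>{0..m}. x \<le> f l} = card {l\<in>{0..m}. x \<le> g l}"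
    and j: "1 \<le> j" "j \<le> m"
  shows "f j = g j"
proof -
  have c1: "card {l\<in>{1..m}. x \<le> f l} = card {l\<in>{1..m}. x \<le> g l}" for x
    using c cnt_split[of m "\<lambda>l. x \<le> f l"] cnt_split[of m "\<lambda>l. x \<le> g l"] assms(3) by auto
  have "f j \<le> g j" using C_ge[OF assms(2) j, of "f j"] c1[of "f j"] C_self[OF assms(1) j] by simp
  moreover have "g j \<le> f j" using C_ge[OF assms(1) j, of "g j"] c1[of "g j"] C_self[OF assms(2) j] by simp
  ultimately show ?thesis by simp
qed

lemma rot_sum:
  fixes f :: "nat \<Rightarrow> real"
  shows "1 \<le> a \<Longrightarrow> a \<le> Suc m \<Longrightarrow>
    (\<Sum>j=0..m. (if Suc j < a then f (Suc j) else if Suc j = a then f 0 else f j)) = (\<Sum>j=0..m. f j)"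
proof (induction m)
  case 0 then show ?case by auto
next
  case (Suc m)
  show ?case
  proof (cases "a \<le> Suc m")
    case True
    then show ?thesis using Suc by simp
  next
    case False
    then have a: "a = Suc (Suc m)" using Suc.prems by simp
    have "(\<Sum>j=0..Suc m. (if Suc j < a then f (Suc j) else if Suc j = a then f 0 else f j))
        = (\<Sum>j=0..m. f (Suc j)) + f 0"
      using a by (simp add: sum.atLeast0_atMost_Suc)
    also have "\<dots> = (\<Sum>j=0..Suc m. f j)"
      by (simp only: sum.atLeast0_atMost_Suc_shift o_def add.commute)
    finally show ?thesis .
  qed
qed

lemma de_mono:
  fixes de :: "nat \<Rightarrow> real"
  assumes "l_dom_int m de"
  shows "1 \<le> i \<Longrightarrow> i \<le> j \<Longrightarrow> j \<le> m \<Longrightarrow> de j \<le> de i"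
proof (induction j)
  case 0 then show ?case by simp
next
  case (Suc j)
  show ?case
  proof (cases "i = Suc j")
    case True then show ?thesis by simp
  next
    case False
    then have "de j \<le> de i" using Suc by auto
    moreover have "de j - de (Suc j) \<in> \<nat>" using assms Suc.prems False unfolding l_dom_int_def by auto
    then have "de (Suc j) \<le> de j" by (auto elim: Nats_cases)
    ultimately show ?thesis by simp
  qed
qed

theorem mainTheorem12:
  fixes m k k' :: nat and de :: "nat \<Rightarrow> real" and K K' :: "nat \<Rightarrow> nat"
  assumes "1 \<le> m"
    and "is_weight m de" and "l_dom_int m de"
    and "k' \<le> k"
    and "K \<in> kappa m de k" and "K' \<in> kappa m de k'" and "K \<noteq> K'"
    and "same_inf_char m (\<lambda>j. de j + lamK m K j) (\<lambda>j. de j + lamK m K' j)"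
  shows "\<exists>mu. is_weight m mu \<and> a_dom_int m mu \<and>
           weq m (\<lambda>j. de j + lamK m K j) (wshift m mu (idelta_k m de k - 1)) \<and>
           weq m (\<lambda>j. de j + lamK m K' j) (wshift m mu (idelta_k m de k))"
proof -
  define s where "s = (\<lambda>j. de j + lamK m K j + rho m j)"
  define s' where "s' = (\<lambda>j. de j + lamK m K' j + rho m j)"
  obtain p where p: "p permutes {0..m}" and ps: "\<forall>i\<le>m. s' i = s (p i)"
    using assms(8) unfolding same_inf_char_def s_def s'_def by auto
  have K0: "\<And>j. j = 0 \<or> m < j \<Longrightarrow> K j = 0" and Kn: "normK m K = k"
    and Kb: "\<And>i. 1 \<le> i \<Longrightarrow> i < m \<Longrightarrow> real (K i) \<le> de i - de (Suc i)"
    using assms(5) unfolding kappa_def by auto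
  have K0': "\<And>j. j = 0 \<or> m < j \<Longrightarrow> K' j = 0" and Kn': "normK m K' = k'"
    and Kb': "\<And>i. 1 \<le> i \<Longrightarrow> i < m \<Longrightarrow> real (K' i) \<le> de i - de (Suc i)"
    using assms(6) unfolding kappa_def by auto
  have s0: "s 0 = de 0 + real k + rho m 0" by (simp add: s_def lamK_def Kn)
  have s0': "s' 0 = de 0 + real k' + rho m 0" by (simp add: s'_def lamK_def Kn')
  have sj: "\<And>j. j \<noteq> 0 \<Longrightarrow> s j = de j - real (K j) + rho m j" by (simp add: s_def lamK_def)
  have sj': "\<And>j. j \<noteq> 0 \<Longrightarrow> s' j = de j - real (K' j) + rho m j" by (simp add: s'_def lamK_def)
  have rr: "\<And>j. rho m j = rho m (Suc j) + 1" by (simp add: rho_def)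
  have ldom: "\<And>i. 1 \<le> i \<Longrightarrow> i < m \<Longrightarrow> de i - de (Suc i) \<in> \<nat>"
    using assms(3) unfolding l_dom_int_def by auto
  have sd: "sdec m s" unfolding sdec_def
  proof safe
    fix j assume j: "1 \<le> j" "j < m"
    show "s (Suc j) < s j" using sj[of j] sj[of "Suc j"] rr[of j] Kb[OF j] j by simp
  qed
  have sd': "sdec m s'" unfolding sdec_def
  proof safe
    fix j assume j: "1 \<le> j" "j < m"
    show "s' (Suc j) < s' j" using sj'[of j] sj'[of "Suc j"] rr[of j] Kb'[OF j] j by simp
  qed
  have cs: "\<forall>x. card {l\<in>{0..m}. x \<le> s l} = card {l\<in>{0..m}. x \<le> s' l}"
  proof
    fix x show "card {l\<in>{0..m}. x \<le> s l} = card {l\<in>{0..m}. x \<le> s' l}"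
      using cnt_perm[OF p ps, of "\<lambda>v. x \<le> v"] by simp
  qed
  have Keq: "K = K'" if h: "\<And>j. 1 \<le> j \<Longrightarrow> j \<le> m \<Longrightarrow> K j = K' j"
  proof
    fix j show "K j = K' j"
      using h[of j] K0[of j] K0'[of j] by (cases "j = 0 \<or> m < j") auto
  qed
  have kk: "k' < k"
  proof (rule ccontr)
    assume "\<not> k' < k"
    then have "k = k'" using assms(4) by simp
    then have "s 0 = s' 0" using s0 s0' by simp
    then have "\<And>j. 1 \<le> j \<Longrightarrow> j \<le> m \<Longrightarrow> s j = s' j" using G[OF sd sd' _ cs] by blast
    then have "\<And>j. 1 \<le> j \<Longrightarrow> j \<le> m \<Longrightarrow> K j = K' j" using sj sj' by fastforce
    then show False using Keq assms(7) by blast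
  qed
  define a where "a = p 0"
  have am: "a \<le> m" using permutes_in_image[OF p, of 0] unfolding a_def by simp
  have sa: "s a = s' 0" using ps unfolding a_def by simp
  have a1: "1 \<le> a"
  proof (rule ccontr)
    assume "\<not> 1 \<le> a" then have "a = 0" by simp
    then show False using sa s0 s0' kk by simp
  qed
  have a2: "s 0 < s (a - 1)" if a2: "2 \<le> a"
  proof (rule ccontr)
    assume nl: "\<not> s 0 < s (a - 1)"
    define x where "x = s (a - 1)"
    have c1: "card {l\<in>{0..m}. x \<le> s l} = a"
      using cnt_split[of m "\<lambda>l. x \<le> s l"] C_self[OF sd, of "a - 1"] a2 am nl unfolding x_def by simp
    have kb: "real (K (a - 1)) \<le> de (a - 1) - de (Suc (a - 1))" using Kb[of "a - 1"] a2 am by simp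
    have "s' a < x" unfolding x_def
      using sj'[of a] sj[of "a - 1"] rr[of "a - 1"] kb a2 am by simp
    then have "{l\<in>{1..m}. x \<le> s' l} \<subseteq> {1..<a}"
      using sdec_le[OF sd', of a] a1 by (force simp: not_less[symmetric])
    then have "card {l\<in>{1..m}. x \<le> s' l} \<le> a - 1" using card_mono[of "{1..<a}"] by fastforce
    moreover have "s' 0 < x" unfolding x_def using sa sdec_lt[OF sd, of "a - 1" a] a2 am by simp
    ultimately have "card {l\<in>{0..m}. x \<le> s' l} \<le> a - 1"
      using cnt_split[of m "\<lambda>l. x \<le> s' l"] by simp
    then show False using c1 cs a2 by simp
  qed
  define t where "t = (\<lambda>j. if j = 0 then s a else if j = a then s 0 else s j)"
  have tp: "\<forall>l\<le>m. t l = s (Transposition.transpose 0 a l)" unfolding t_def Transposition.transpose_def by auto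
  have tperm: "Transposition.transpose 0 a permutes {0..m}" using am by (intro permutes_swap_id) auto
  have ct: "\<forall>x. card {l\<in>{0..m}. x \<le> t l} = card {l\<in>{0..m}. x \<le> s' l}"
  proof
    fix x show "card {l\<in>{0..m}. x \<le> t l} = card {l\<in>{0..m}. x \<le> s' l}"
      using cnt_perm[OF tperm tp, of "\<lambda>v. x \<le> v"] cs by simp
  qed
  have sdt: "sdec m t" unfolding sdec_def
  proof safe
    fix j assume j: "1 \<le> j" "j < m"
    show "t (Suc j) < t j"
    proof (cases "j = a")
      case True
      then show ?thesis using sdec_lt[OF sd, of a "Suc a"] j sa s0 s0' kk unfolding t_def by simp
    next
      case False
      show ?thesis
      proof (cases "Suc j = a")
        case True
        then show ?thesis using a2 j unfolding t_def by auto
      next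
        case False
        then show ?thesis using \<open>j \<noteq> a\<close> sd j unfolding t_def sdec_def by auto
      qed
    qed
  qed
  have ts: "\<And>j. 1 \<le> j \<Longrightarrow> j \<le> m \<Longrightarrow> t j = s' j"
    using G[OF sdt sd' _ ct] sa unfolding t_def by auto
  have sa': "s' a = s 0" using ts[OF a1 am] unfolding t_def using a1 by simp
  have sjj: "s' j = s j" if "1 \<le> j" "j \<le> m" "j \<noteq> a" for j
    using ts[OF that(1,2)] that unfolding t_def by auto
  have KK: "\<And>j. 1 \<le> j \<Longrightarrow> j \<le> m \<Longrightarrow> j \<noteq> a \<Longrightarrow> K' j = K j"
    using sjj sj sj' by fastforce
  have dta: "dtilde de a = real k + real (K' a)"
    using sa' sj'[of a] s0 a1 unfolding dtilde_def rho_def by simp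
  define P where "P = (\<lambda>i. 1 \<le> i \<and> i \<le> m \<and> (\<forall>j. 1 \<le> j \<and> j \<le> i \<longrightarrow> de j = de 1))"
  have ie: "idelta m de = Greatest P" unfolding idelta_def P_def by (rule refl)
  have P1: "P 1" unfolding P_def
  proof (intro conjI allI impI)
    fix j :: nat assume "1 \<le> j \<and> j \<le> 1"
    then have "j = 1" by linarith
    then show "de j = de 1" by simp
  qed (use assms(1) in simp_all)
  have Pb: "\<And>y. P y \<Longrightarrow> y \<le> m" unfolding P_def by simp
  have PI: "P (idelta m de)" unfolding ie by (rule GreatestI_nat[of P 1 m, OF P1 Pb])
  have ida: "idelta m de \<le> a"
  proof (rule ccontr)
    assume "\<not> idelta m de \<le> a"
    then have h: "Suc a \<le> idelta m de" by simp
    have P1: "\<forall>j. 1 \<le> j \<and> j \<le> idelta m de \<longrightarrow> de j = de 1" and P2: "idelta m de \<le> m"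
      using PI unfolding P_def by blast+
    have e1: "de a = de 1" using P1[rule_format, of a] a1 h by linarith
    have e2: "de (Suc a) = de 1" using P1[rule_format, of "Suc a"] h by linarith
    have am': "a < m" using h P2 by simp
    have z: "K a = 0" "K' a = 0" using Kb[OF a1 am'] Kb'[OF a1 am'] e1 e2 by simp_all
    have "K j = K' j" if "1 \<le> j" "j \<le> m" for j
    proof (cases "j = a")
      case True then show ?thesis using z by simp
    next
      case False then show ?thesis using KK[OF that False] by simp
    qed
    then have "K = K'" by (rule Keq)
    then show False using assms(7) by simp
  qed
  have ia: "idelta_k m de k = a" unfolding idelta_k_def
  proof (rule Greatest_equality)
    show "idelta m de \<le> a \<and> a \<le> m \<and> real k \<le> dtilde de a" using ida am dta by simp
  next
    fix y assume y: "idelta m de \<le> y \<and> y \<le> m \<and> real k \<le> dtilde de y"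
    show "y \<le> a"
    proof (rule ccontr)
      assume "\<not> y \<le> a"
      then have ya: "Suc a \<le> y" by simp
      have "de y \<le> de (Suc a)" using de_mono[OF assms(3), of "Suc a" y] ya y by simp
      moreover have "real (K' a) \<le> de a - de (Suc a)" using Kb'[of a] a1 ya y by simp
      moreover have "real (Suc a) \<le> real y" using ya by (rule of_nat_mono)
      moreover have "de a - real a - de 0 = real k + real (K' a)" using dta unfolding dtilde_def .
      ultimately have "de y - real y - de 0 < real k" by simp
      then have "dtilde de y < real k" unfolding dtilde_def .
      then show False using y by simp
    qed
  qed
  define tau where "tau = (\<lambda>j. if Suc j < a then s (Suc j) else if Suc j = a then s 0 else s j)"
  define mu where "mu = (\<lambda>j. tau j - rho m j)"
  have ws: "\<And>i j. wshift m mu i j = (if j = 0 then tau i else if j \<le> i then tau (j - 1) else tau j) - rho m j"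
    unfolding wshift_def mu_def by simp
  have w1: "weq m (\<lambda>j. de j + lamK m K j) (wshift m mu (a - 1))"
    unfolding weq_def ws
  proof safe
    fix j assume "j \<le> m"
    show "de j + lamK m K j = (if j = 0 then tau (a - 1) else if j \<le> a - 1 then tau (j - 1) else tau j) - rho m j"
      using a1 unfolding tau_def s_def by auto
  qed
  have w2: "weq m (\<lambda>j. de j + lamK m K' j) (wshift m mu a)"
    unfolding weq_def ws
  proof safe
    fix j assume j: "j \<le> m"
    have "s' j = (if j = 0 then tau a else if j \<le> a then tau (j - 1) else tau j)"
      using a1 sa sa' sjj[of j] j unfolding tau_def by auto
    then show "de j + lamK m K' j = (if j = 0 then tau a else if j \<le> a then tau (j - 1) else tau j) - rho m j"
      unfolding s'_def by simp
  qed
  have nd: "s j - s (Suc j) - 1 \<in> \<nat>" if j: "1 \<le> j" "j < m" for j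
  proof -
    obtain n where n: "de j - de (Suc j) = real n" using ldom[OF j] by (auto elim: Nats_cases)
    have "K j \<le> n" using Kb[OF j] n by simp
    then have "s j - s (Suc j) - 1 = real (n - K j + K (Suc j))"
      using sj[of j] sj[of "Suc j"] rr[of j] n j by (simp add: of_nat_diff)
    then show ?thesis by simp
  qed
  have nd': "s' j - s' (Suc j) - 1 \<in> \<nat>" if j: "1 \<le> j" "j < m" for j
  proof -
    obtain n where n: "de j - de (Suc j) = real n" using ldom[OF j] by (auto elim: Nats_cases)
    have "K' j \<le> n" using Kb'[OF j] n by simp
    then have "s' j - s' (Suc j) - 1 = real (n - K' j + K' (Suc j))"
      using sj'[of j] sj'[of "Suc j"] rr[of j] n j by (simp add: of_nat_diff)
    then show ?thesis by simp
  qed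
  have adom: "a_dom_int m mu" unfolding a_dom_int_def
  proof safe
    fix i assume i: "i < m"
    have e: "mu i - mu (Suc i) = tau i - tau (Suc i) - 1" unfolding mu_def using rr[of i] by simp
    consider "Suc (Suc i) < a" | "Suc (Suc i) = a" | "Suc i = a" | "a \<le> i" by linarith
    then show "mu i - mu (Suc i) \<in> \<nat>"
    proof cases
      case 1 then show ?thesis unfolding e tau_def using nd[of "Suc i"] am by simp
    next
      case 2
      then have "tau i - tau (Suc i) - 1 = s' (Suc i) - s' (Suc (Suc i)) - 1"
        unfolding tau_def using sa' sjj[of "Suc i"] am by simp
      then show ?thesis unfolding e using nd'[of "Suc i"] 2 am by simp
    next
      case 3
      then have "tau i - tau (Suc i) - 1 = real (k - k' - 1)"
        unfolding tau_def using sa s0 s0' kk by (simp add: of_nat_diff)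
      then show ?thesis unfolding e by simp
    next
      case 4
      then show ?thesis unfolding e tau_def using nd[of i] a1 i by simp
    qed
  qed
  have sumK: "(\<Sum>j=0..m. lamK m K j) = 0"
  proof -
    have "(\<Sum>j=0..m. lamK m K j) = lamK m K 0 + (\<Sum>j=Suc 0..m. lamK m K j)"
      by (simp add: sum.atLeast_Suc_atMost)
    also have "(\<Sum>j=Suc 0..m. lamK m K j) = (\<Sum>j=1..m. - real (K j))"
      by (intro sum.cong) (auto simp: lamK_def)
    finally show ?thesis by (simp add: lamK_def normK_def sum_negf)
  qed
  have sums: "(\<Sum>j=0..m. s j) = (\<Sum>j=0..m. rho m j)"
    using sumK assms(2) unfolding s_def is_weight_def by (simp add: sum.distrib)
  have sumt: "(\<Sum>j=0..m. tau j) = (\<Sum>j=0..m. s j)"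
    unfolding tau_def using rot_sum[of a m s] a1 am by simp
  have wt: "is_weight m mu" unfolding is_weight_def mu_def
    using sums sumt by (simp add: sum_subtractf)
  show ?thesis using wt adom w1 w2 ia by auto
qed

end
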